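(* The scalar curvature $r=\langle G,{\rm Ric}\rangle_{\mathcal{B}}$ is constant, given by \[ r=\frac{[2]_q}{q^2+q^{-2}}(q^{-6}+q^6)=[2]_q(1+(q^{-2}-q^2)^2), \] and as $q\to 1$ the scalar curvature converges to 2.
   Context: $\mathcal{B}=\mathcal{O}(S^2_q)$, $q\in(0,1]$, $[x]_q=\frac{q^{-x}-q^x}{q^{-1}-q}$. With the exact frame $\omega_j=(-1)^{1-j}\begin{pmatrix}0&q^{1/2}(t^1_{2-j,-1})^*\\ q^{-1/2}(t^1_{2-j,1})^*&0\end{pmatrix}$ ($j=1,2,3$) of the one-forms of the Dabrowski--Sitarz spectral triple, right inner product $\langle\rho,\eta\rangle_{\mathcal{B}}=\mathrm{Tr}(\mathrm{diag}(q,q^{-1})\rho^*\eta)$ and line element $G=\sum_j\omega_j\otimes\omega_j^\dagger$, the Ricci curvature of the Levi-Civita connection is ${\rm Ric}=\frac{[2]_q}{q^2+q^{-2}}\,\omega_i\otimes\mathrm{diag}(q^{-4},q^4)\,\omega_i^\dagger$. *)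

theory Defs
  imports Complex_Main
begin

definition qnum :: "real \<Rightarrow> real \<Rightarrow> real" where
  "qnum x q = (if q = 1 then x else (q powr (-x) - q powr x) / (inverse q - q))"

definition is_star :: "('a::real_algebra_1 \<Rightarrow> 'a) \<Rightarrow> bool" where
  "is_star st \<longleftrightarrow> (\<forall>x y. st (x + y) = st x + st y) \<and> (\<forall>x y. st (x * y) = st y * st x)
     \<and> (\<forall>x. st (st x) = x) \<and> (\<forall>r x. st (r *\<^sub>R x) = r *\<^sub>R st x)"

text \<open>Defining relations of O(SU_q(2)) (Dabrowski--Sitarz / DLSSV conventions):
  ba = q ab, b*a = q ab*, bb* = b*b, aa* + bb* = 1, a*a + q^2 b*b = 1.\<close>
definition suq2_rel :: "('a::real_algebra_1 \<Rightarrow> 'a) \<Rightarrow> real \<Rightarrow> 'a \<Rightarrow> 'a \<Rightarrow> bool" where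
  "suq2_rel st q a b \<longleftrightarrow>
     b * a = q *\<^sub>R (a * b) \<and> st b * a = q *\<^sub>R (a * st b) \<and> b * st b = st b * b \<and>
     a * st a + b * st b = 1 \<and> st a * a + (q^2) *\<^sub>R (st b * b) = 1"

text \<open>Spin-1 corepresentation matrix t^1_{i,j}, i,j in {-1,0,1}, obtained from
  t^{1/2} = [[a, b], [-q b*, a*]] on the q-symmetric square.\<close>
definition t1 :: "('a::real_algebra_1 \<Rightarrow> 'a) \<Rightarrow> real \<Rightarrow> 'a \<Rightarrow> 'a \<Rightarrow> int \<Rightarrow> int \<Rightarrow> 'a" where
  "t1 st q a b i j =
    (let s = sqrt (1 + q^2) in
     if i = 1 \<and> j = 1 then a * a
     else if i = 0 \<and> j = 1 then (- q * s) *\<^sub>R (a * st b)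
     else if i = -1 \<and> j = 1 then (q^2) *\<^sub>R (st b * st b)
     else if i = 1 \<and> j = 0 then s *\<^sub>R (a * b)
     else if i = 0 \<and> j = 0 then a * st a - (q^2) *\<^sub>R (b * st b)
     else if i = -1 \<and> j = 0 then (- s) *\<^sub>R (st a * st b)
     else if i = 1 \<and> j = -1 then b * b
     else if i = 0 \<and> j = -1 then s *\<^sub>R (b * st a)
     else if i = -1 \<and> j = -1 then st a * st a
     else 0)"

text \<open>2x2 matrices over the algebra, indices 0,1.\<close>
type_synonym 'a mat2 = "nat \<Rightarrow> nat \<Rightarrow> 'a"

definition mmul :: "'a::real_algebra_1 mat2 \<Rightarrow> 'a mat2 \<Rightarrow> 'a mat2" where
  "mmul M N = (\<lambda>i j. \<Sum>k<2. M i k * N k j)"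

definition madj :: "('a::real_algebra_1 \<Rightarrow> 'a) \<Rightarrow> 'a mat2 \<Rightarrow> 'a mat2" where
  "madj st M = (\<lambda>i j. st (M j i))"

definition mtr :: "'a::real_algebra_1 mat2 \<Rightarrow> 'a" where
  "mtr M = M 0 0 + M 1 1"

definition mdiag :: "real \<Rightarrow> real \<Rightarrow> 'a::real_algebra_1 mat2" where
  "mdiag x y = (\<lambda>i j. if i = 0 \<and> j = 0 then of_real x else if i = 1 \<and> j = 1 then of_real y else 0)"

definition lmult :: "'a::real_algebra_1 \<Rightarrow> 'a mat2 \<Rightarrow> 'a mat2" where
  "lmult x M = (\<lambda>i j. x * M i j)"

definition ip :: "('a::real_algebra_1 \<Rightarrow> 'a) \<Rightarrow> real \<Rightarrow> 'a mat2 \<Rightarrow> 'a mat2 \<Rightarrow> 'a" where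
  "ip st q \<rho> \<eta> = mtr (mmul (mdiag q (inverse q)) (mmul (madj st \<rho>) \<eta>))"

text \<open>Elements of the balanced tensor product of one-forms, given as finite sums
  of elementary tensors (lists of pairs), with the interior tensor product inner product
  <rho1 (x) sigma1, rho2 (x) sigma2> = <sigma1, <rho1, rho2> sigma2>.\<close>
definition ip2 :: "('a::real_algebra_1 \<Rightarrow> 'a) \<Rightarrow> real \<Rightarrow> ('a mat2 \<times> 'a mat2) list \<Rightarrow> ('a mat2 \<times> 'a mat2) list \<Rightarrow> 'a" where
  "ip2 st q T S = (\<Sum>(\<rho>, \<sigma>)\<leftarrow>T. \<Sum>(\<eta>, \<tau>)\<leftarrow>S. ip st q \<sigma> (lmult (ip st q \<rho> \<eta>) \<tau>))"

text \<open>The exact frame omega_j, j = 1,2,3: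
  omega_j = (-1)^(1-j) [[0, q^(1/2) (t^1_{2-j,-1})^*], [q^(-1/2) (t^1_{2-j,1})^*, 0]].
  Note (-1)^(1-j) = (-1)^(j+1).\<close>
definition omega :: "('a::real_algebra_1 \<Rightarrow> 'a) \<Rightarrow> real \<Rightarrow> 'a \<Rightarrow> 'a \<Rightarrow> nat \<Rightarrow> 'a mat2" where
  "omega st q a b j = (\<lambda>r c. (-1)^(j+1) *\<^sub>R
      (if r = 0 \<and> c = 1 then sqrt q *\<^sub>R st (t1 st q a b (2 - int j) (-1))
       else if r = 1 \<and> c = 0 then inverse (sqrt q) *\<^sub>R st (t1 st q a b (2 - int j) 1)
       else 0))"

definition line_elt :: "('a::real_algebra_1 \<Rightarrow> 'a) \<Rightarrow> real \<Rightarrow> 'a \<Rightarrow> 'a \<Rightarrow> ('a mat2 \<times> 'a mat2) list" where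
  "line_elt st q a b = map (\<lambda>j. (omega st q a b j, madj st (omega st q a b j))) [1, 2, 3]"

definition ricci :: "('a::real_algebra_1 \<Rightarrow> 'a) \<Rightarrow> real \<Rightarrow> 'a \<Rightarrow> 'a \<Rightarrow> ('a mat2 \<times> 'a mat2) list" where
  "ricci st q a b = map (\<lambda>i. (omega st q a b i,
      lmult (of_real (qnum 2 q / (q^2 + inverse q ^ 2)))
        (mmul (mdiag (inverse q ^ 4) (q ^ 4)) (madj st (omega st q a b i))))) [1, 2, 3]"

definition scalar_curv :: "('a::real_algebra_1 \<Rightarrow> 'a) \<Rightarrow> real \<Rightarrow> 'a \<Rightarrow> 'a \<Rightarrow> 'a" where
  "scalar_curv st q a b = ip2 st q (line_elt st q a b) (ricci st q a b)"

end

theory Submission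
  imports Defs
begin


lemma qnum2: assumes "0 < q" shows "qnum 2 q = q + inverse q"
proof (cases "q = 1")
  case True then show ?thesis by (simp add: qnum_def)
next
  case False
  have pm: "q powr (-2) = inverse q ^ 2"
    using assms by (simp add: powr_minus powr_realpow power_inverse)
  have p2: "q powr 2 = q ^ 2" using assms by (simp add: powr_realpow)
  have ne: "inverse q - q \<noteq> 0" proof
    assume "inverse q - q = 0"
    then have "q * q = 1" using assms by (simp add: field_simps)
    then have "(q - 1) * (q + 1) = 0" by (simp add: algebra_simps)
    then have "q = 1" using assms by simp
    then show False using False by simp
  qed
  have "inverse q ^ 2 - q ^ 2 = (inverse q - q) * (q + inverse q)"
    by (simp add: algebra_simps power2_eq_square)
  then show ?thesis using False ne by (simp add: qnum_def pm p2)
qed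

lemma idq: "(x::real) * y = 1 \<Longrightarrow> y^6+x^6 = (x^2+y^2)*(1+(y^2-x^2)^2)" by algebra

lemma part2: assumes "0 < q" shows "qnum 2 q / (q^2 + inverse q ^ 2) * (inverse q ^ 6 + q ^ 6)
           = qnum 2 q * (1 + (inverse q ^ 2 - q ^ 2)^2)"
proof -
  have B: "q^2 + inverse q ^ 2 \<noteq> 0" using assms by (intro order.strict_implies_not_eq[symmetric] add_pos_pos) auto
  have "inverse q ^ 6 + q ^ 6 = (q^2 + inverse q ^ 2) * (1 + (inverse q ^ 2 - q ^ 2)^2)"
    using assms by (intro idq) simp
  then show ?thesis using B by simp
qed

lemma part3: "((\<lambda>p. qnum 2 p / (p^2 + inverse p ^ 2) * (inverse p ^ 6 + p ^ 6)) \<longlongrightarrow> 2) (at_left (1::real))"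
proof -
  have ev: "eventually (\<lambda>p. (p + inverse p) / (p^2 + inverse p ^ 2) * (inverse p ^ 6 + p ^ 6)
     = qnum 2 p / (p^2 + inverse p ^ 2) * (inverse p ^ 6 + p ^ 6)) (at_left (1::real))"
  proof -
    have "eventually (\<lambda>p. p > (0::real)) (at_left 1)"
      using eventually_at_left_real[of 0 "1::real"] by (auto elim: eventually_mono)
    then show ?thesis by eventually_elim (simp add: qnum2)
  qed
  have "((\<lambda>p. (p + inverse p) / (p^2 + inverse p ^ 2) * (inverse p ^ 6 + p ^ 6)) \<longlongrightarrow>
        (1 + inverse 1) / (1^2 + inverse 1 ^ 2) * (inverse 1 ^ 6 + 1 ^ 6)) (at_left (1::real))"
    by (intro tendsto_intros) auto
  then have "((\<lambda>p. (p + inverse p) / (p^2 + inverse p ^ 2) * (inverse p ^ 6 + p ^ 6)) \<longlongrightarrow> 2) (at_left (1::real))"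
    by simp
  then show ?thesis using tendsto_cong[OF ev] by simp
qed


definition offd :: "'a::real_algebra_1 \<Rightarrow> 'a \<Rightarrow> 'a mat2" where
  "offd x y = (\<lambda>r c. if r = 0 \<and> c = 1 then x else if r = 1 \<and> c = 0 then y else 0)"

lemma star_basic:
  assumes "is_star st"
  shows "st 0 = 0" "st 1 = 1" "st (x + y) = st x + st y" "st (x * y) = st y * st x"
    "st (st x) = x" "st (r *\<^sub>R x) = r *\<^sub>R st x" "st (of_real r) = of_real r"
    "st (- x) = - st x" "st (x - y) = st x - st y"
proof -
  show add: "st (x + y) = st x + st y" and mul: "st (x * y) = st y * st x"
    and inv: "st (st x) = x" and sc: "st (r *\<^sub>R x) = r *\<^sub>R st x"
    using assms unfolding is_star_def by auto
  show z: "st 0 = 0" using assms unfolding is_star_def by (metis scaleR_zero_left)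
  show one: "st 1 = 1"
  proof -
    have m: "\<And>x y. st (x * y) = st y * st x" and i: "\<And>x. st (st x) = x"
      using assms unfolding is_star_def by auto
    have "st 1 = st 1 * st (st 1)" by (simp add: i)
    also have "\<dots> = st (st 1 * 1)" by (rule m[symmetric])
    also have "\<dots> = 1" by (simp add: i)
    finally show ?thesis .
  qed
  show "st (of_real r) = of_real r"
    using assms one unfolding is_star_def of_real_def by simp
  have s: "\<And>r x. st (r *\<^sub>R x) = r *\<^sub>R st x" and ad: "\<And>x y. st (x + y) = st x + st y"
    using assms unfolding is_star_def by auto
  show ng: "st (- x) = - st x" using s[of "-1" x] by simp
  show "st (x - y) = st x - st y" using s[of "-1" y] ad[of x "- y"] by simp
qed

lemma madj_offd: "is_star st \<Longrightarrow> madj st (offd x y) = offd (st y) (st x)"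
  by (rule ext)+ (auto simp: madj_def offd_def star_basic)

lemma lmult_offd: "lmult z (offd x y) = offd (z * x) (z * y)"
  by (rule ext)+ (auto simp: lmult_def offd_def)

lemma mmul_diag_offd: "mmul (mdiag d e) (offd x y) = offd (d *\<^sub>R x) (e *\<^sub>R y)"
  by (rule ext)+ (auto simp: mmul_def mdiag_def offd_def numeral_2_eq_2 lessThan_Suc scaleR_conv_of_real)

lemma ip_offd: "is_star st \<Longrightarrow> ip st q (offd x y) (offd u v) = q *\<^sub>R (st y * v) + inverse q *\<^sub>R (st x * u)"
  by (simp add: ip_def mtr_def mmul_def madj_def mdiag_def offd_def numeral_2_eq_2 lessThan_Suc
        scaleR_conv_of_real star_basic)

lemma omega_offd: "is_star st \<Longrightarrow> omega st q a b j = offd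
   (((-1)^(j+1) * sqrt q) *\<^sub>R st (t1 st q a b (2 - int j) (-1)))
   (((-1)^(j+1) * inverse (sqrt q)) *\<^sub>R st (t1 st q a b (2 - int j) 1))"
  by (rule ext)+ (auto simp: omega_def offd_def)

lemma ip2_map: "ip2 st q (map (\<lambda>j. (P j, Q j)) js) (map (\<lambda>i. (R i, S i)) is)
   = (\<Sum>j\<leftarrow>js. \<Sum>i\<leftarrow>is. ip st q (Q j) (lmult (ip st q (P j) (R i)) (S i)))"
  by (simp add: ip2_def o_def)

lemma term_eq:
  assumes "is_star st"
  shows "ip st q (madj st (offd x y)) (lmult X (lmult (of_real c) (mmul (mdiag e f) (madj st (offd u v)))))
    = (c * q * f) *\<^sub>R (x * X * st u) + (c * inverse q * e) *\<^sub>R (y * X * st v)"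
  using assms by (simp add: madj_offd lmult_offd mmul_diag_offd ip_offd star_basic
     scaleR_conv_of_real[symmetric] mult.assoc algebra_simps)



lemma tvals:
  "t1 st q a b 1 (-1) = b * b"
  "t1 st q a b 0 (-1) = sqrt (1 + q^2) *\<^sub>R (b * st a)"
  "t1 st q a b (-1) (-1) = st a * st a"
  "t1 st q a b 1 1 = a * a"
  "t1 st q a b 0 1 = (- q * sqrt (1 + q^2)) *\<^sub>R (a * st b)"
  "t1 st q a b (-1) 1 = (q^2) *\<^sub>R (st b * st b)"
  by (simp_all add: t1_def Let_def)



lemma rels:
  assumes st: "is_star st" and R: "suq2_rel st q a b"
  shows "b * a = q *\<^sub>R (a * b)" "st b * a = q *\<^sub>R (a * st b)" "b * st b = st b * b"
    "a * st a = 1 - b * st b" "st a * a = 1 - q^2 *\<^sub>R (st b * b)"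
  using R unfolding suq2_rel_def by (auto simp: algebra_simps)

lemma coreA:
  assumes st: "is_star st" and R: "suq2_rel st q a b"
  shows "st b * (st b * (b * b)) + ((1 + q\<^sup>2) *\<^sub>R (a * (st b * (b * st a))) + a * (a * (st a * st a))) = 1"
proof -
  note r = rels[OF st R]
  define P where "P = b * st b"
  have e1: "a * (a * (st a * st a)) = 1 - P - a * (b * (st b * st a))"
  proof -
    have "a * (a * (st a * st a)) = a * ((a * st a) * st a)" by (simp add: mult.assoc)
    also have "\<dots> = a * st a - a * (P * st a)" by (simp add: r(4) P_def algebra_simps)
    also have "\<dots> = 1 - P - a * (b * (st b * st a))" by (simp add: r(4) P_def mult.assoc)
    finally show ?thesis .
  qed
  have e2: "a * (st b * (b * st a)) = a * (b * (st b * st a))"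
    by (metis r(3) mult.assoc)
  have e3: "q^2 *\<^sub>R (a * (b * (st b * st a))) = P - P * P"
  proof -
    have "q^2 *\<^sub>R (a * (b * (st b * st a))) = q *\<^sub>R ((q *\<^sub>R (a * b)) * (st b * st a))"
      by (simp add: power2_eq_square mult.assoc)
    also have "\<dots> = b * ((q *\<^sub>R (a * st b)) * st a)" by (simp add: r(1)[symmetric] mult.assoc)
    also have "\<dots> = b * (st b * (a * st a))" by (simp add: r(2)[symmetric] mult.assoc)
    also have "\<dots> = P - P * P" by (simp add: r(4) P_def algebra_simps)
    finally show ?thesis .
  qed
  have e4: "st b * (st b * (b * b)) = P * P"
  proof -
    have "st b * (st b * (b * b)) = st b * ((st b * b) * b)" by (simp add: mult.assoc)
    also have "\<dots> = (st b * b) * (st b * b)" by (metis r(3) mult.assoc)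
    also have "st b * b = P" by (simp add: P_def r(3))
    finally show ?thesis .
  qed
  show ?thesis
    by (simp add: e1 e2 e3 e4 scaleR_left_distrib algebra_simps)
qed

lemma coreB:
  assumes st: "is_star st" and R: "suq2_rel st q a b"
  shows "st a * (st a * (a * a)) +
     ((q * (sqrt (1 + q\<^sup>2) * (q * sqrt (1 + q\<^sup>2)))) *\<^sub>R (b * (st a * (a * st b))) +
      q ^ 4 *\<^sub>R (b * (b * (st b * st b)))) = 1"
proof -
  note r = rels[OF st R]
  define P where "P = b * st b"
  have Q: "st b * b = P" by (simp add: P_def r(3))
  have s: "q * (sqrt (1 + q\<^sup>2) * (q * sqrt (1 + q\<^sup>2))) = q^2 * (1 + q^2)"
  proof -
    have "sqrt (1 + q\<^sup>2) * sqrt (1 + q\<^sup>2) = 1 + q^2" by simp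
    then show ?thesis by (simp add: power2_eq_square algebra_simps)
  qed
  have e1: "st a * (st a * (a * a)) = 1 - q^2 *\<^sub>R P - q^2 *\<^sub>R (st a * (st b * (b * a)))"
  proof -
    have "st a * (st a * (a * a)) = st a * ((st a * a) * a)" by (simp add: mult.assoc)
    also have "\<dots> = st a * a - q^2 *\<^sub>R (st a * ((st b * b) * a))" by (simp add: r(5) algebra_simps)
    also have "st a * ((st b * b) * a) = st a * (st b * (b * a))" by (simp only: mult.assoc)
    also have "st a * a = 1 - q^2 *\<^sub>R P" by (simp add: r(5) Q)
    finally show ?thesis .
  qed
  have e2: "st a * (st b * (b * a)) = q^2 *\<^sub>R P - q^4 *\<^sub>R (P * P)"
  proof -
    have "st a * (st b * (b * a)) = q *\<^sub>R (st a * ((st b * a) * b))" by (simp add: r(1) mult.assoc)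
    also have "\<dots> = q^2 *\<^sub>R ((st a * a) * (st b * b))" by (simp add: r(2) mult.assoc power2_eq_square)
    also have "\<dots> = q^2 *\<^sub>R P - q^4 *\<^sub>R (P * P)" by (simp add: r(5) Q algebra_simps power2_eq_square eval_nat_numeral)
    finally show ?thesis .
  qed
  have e3: "b * (st a * (a * st b)) = P - q^2 *\<^sub>R (P * P)"
  proof -
    have "b * (st a * (a * st b)) = b * ((st a * a) * st b)" by (simp add: mult.assoc)
    also have "\<dots> = P - q^2 *\<^sub>R (b * ((st b * b) * st b))" by (simp add: r(5) P_def algebra_simps)
    also have "b * ((st b * b) * st b) = P * P" by (simp only: P_def mult.assoc)
    finally show ?thesis .
  qed
  have e4: "b * (b * (st b * st b)) = P * P"
  proof -
    have "b * (b * (st b * st b)) = b * ((b * st b) * st b)" by (simp add: mult.assoc)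
    also have "\<dots> = P * P" by (metis P_def r(3) mult.assoc)
    finally show ?thesis .
  qed
  show ?thesis
    unfolding s e1 e2 e3 e4 by (simp add: algebra_simps)
qed

lemma coreAB:
  assumes st: "is_star st" and R: "suq2_rel st q a b"
  shows "st b * (st b * (a * a)) +
     (q\<^sup>2 *\<^sub>R (a * (a * (st b * st b))) -
      (q * (1 + q\<^sup>2)) *\<^sub>R (a * (st b * (a * st b)))) = 0"
proof -
  note r = rels[OF st R]
  define N where "N = a * (a * (st b * st b))"
  have e1: "a * (st b * (a * st b)) = q *\<^sub>R N"
    by (simp add: N_def r(2) mult.assoc[symmetric])
  have e2: "st b * (st b * (a * a)) = q^4 *\<^sub>R N"
  proof -
    have "st b * (st b * (a * a)) = st b * ((st b * a) * a)" by (simp add: mult.assoc)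
    also have "\<dots> = q *\<^sub>R ((st b * a) * (st b * a))" by (metis r(2) mult.assoc mult_scaleR_right mult_scaleR_left)
    also have "\<dots> = q *\<^sub>R ((q *\<^sub>R (a * st b)) * (q *\<^sub>R (a * st b)))" by (simp only: r(2))
    also have "\<dots> = q^3 *\<^sub>R ((a * st b) * (a * st b))" by (simp add: power3_eq_cube)
    also have "(a * st b) * (a * st b) = a * ((st b * a) * st b)" by (simp add: mult.assoc)
    also have "\<dots> = q *\<^sub>R N" by (simp add: r(2) N_def mult.assoc)
    finally show ?thesis by (simp add: eval_nat_numeral)
  qed
  show ?thesis
    unfolding e1 e2 N_def[symmetric] by (simp add: algebra_simps eval_nat_numeral)
qed


lemma UA:
  assumes st: "is_star st" and R: "suq2_rel st q a b"
  shows "(\<Sum>j\<in>{1,2,3::nat}. st (t1 st q a b (2 - int j) (-1)) * t1 st q a b (2 - int j) (-1)) = 1"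
  using coreA[OF st R] st by (simp add: tvals star_basic mult.assoc)

lemma UB:
  assumes st: "is_star st" and R: "suq2_rel st q a b"
  shows "(\<Sum>j\<in>{1,2,3::nat}. st (t1 st q a b (2 - int j) 1) * t1 st q a b (2 - int j) 1) = 1"
  using coreB[OF st R] st by (simp add: tvals star_basic mult.assoc)

lemma UAB:
  assumes st: "is_star st" and R: "suq2_rel st q a b"
  shows "(\<Sum>j\<in>{1,2,3::nat}. st (t1 st q a b (2 - int j) (-1)) * t1 st q a b (2 - int j) 1) = 0"
  using coreAB[OF st R] st by (simp add: tvals star_basic mult.assoc)

lemma UBA:
  assumes st: "is_star st" and R: "suq2_rel st q a b"
  shows "(\<Sum>j\<in>{1,2,3::nat}. st (t1 st q a b (2 - int j) 1) * t1 st q a b (2 - int j) (-1)) = 0"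
proof -
  have "(\<Sum>j\<in>{1,2,3::nat}. st (t1 st q a b (2 - int j) 1) * t1 st q a b (2 - int j) (-1))
     = st (\<Sum>j\<in>{1,2,3::nat}. st (t1 st q a b (2 - int j) (-1)) * t1 st q a b (2 - int j) 1)"
    using st by (simp add: star_basic)
  also have "\<dots> = st 0" using UAB[OF st R] by (simp only:)
  also have "\<dots> = 0" using st by (simp add: star_basic)
  finally show ?thesis .
qed

lemma G:
  fixes x y :: "nat \<Rightarrow> 'a::real_algebra_1"
  shows "(\<Sum>j\<in>S. \<Sum>i\<in>S. c1 *\<^sub>R (x j * (q *\<^sub>R (st (y j) * y i) + r *\<^sub>R (st (x j) * x i)) * st (x i))
              + c2 *\<^sub>R (y j * (q *\<^sub>R (st (y j) * y i) + r *\<^sub>R (st (x j) * x i)) * st (y i)))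
   = c1 *\<^sub>R (q *\<^sub>R ((\<Sum>j\<in>S. x j * st (y j)) * (\<Sum>i\<in>S. y i * st (x i)))
             + r *\<^sub>R ((\<Sum>j\<in>S. x j * st (x j)) * (\<Sum>i\<in>S. x i * st (x i))))
   + c2 *\<^sub>R (q *\<^sub>R ((\<Sum>j\<in>S. y j * st (y j)) * (\<Sum>i\<in>S. y i * st (y i)))
             + r *\<^sub>R ((\<Sum>j\<in>S. y j * st (x j)) * (\<Sum>i\<in>S. x i * st (y i))))"
  by (simp add: sum_product sum.distrib scaleR_sum_right scaleR_add_right distrib_left distrib_right mult.assoc)

lemma sgn_sq: "((-1::real)^n * s) * ((-1)^n * t) = s * t"
proof -
  have "((-1::real)^n) * ((-1)^n) = 1" by (simp flip: power_mult_distrib)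
  then show ?thesis by (metis mult.assoc mult.left_commute mult_1)
qed



lemma main1:
  fixes q :: real and st :: "'a::real_algebra_1 \<Rightarrow> 'a" and a b :: 'a
  assumes q: "0 < q" and st: "is_star st" and R: "suq2_rel st q a b"
  shows "scalar_curv st q a b = of_real (qnum 2 q / (q^2 + inverse q ^ 2) * (inverse q ^ 6 + q ^ 6))"
proof -
  define A where "A j = t1 st q a b (2 - int j) (-1)" for j
  define B where "B j = t1 st q a b (2 - int j) 1" for j
  define xf where "xf j = ((-1)^(j+1) * sqrt q) *\<^sub>R st (A j)" for j
  define yf where "yf j = ((-1)^(j+1) * inverse (sqrt q)) *\<^sub>R st (B j)" for j
  define C where "C = qnum 2 q / (q^2 + inverse q ^ 2)"
  define X where "X j i = q *\<^sub>R (st (yf j) * yf i) + inverse q *\<^sub>R (st (xf j) * xf i)" for j i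
  have om: "\<And>j. omega st q a b j = offd (xf j) (yf j)"
    unfolding xf_def yf_def A_def B_def by (rule omega_offd[OF st])
  have d: "distinct [1,2,3::nat]" by simp
  have "scalar_curv st q a b = (\<Sum>j\<leftarrow>[1,2,3]. \<Sum>i\<leftarrow>[1,2,3]. ip st q (madj st (offd (xf j) (yf j)))
     (lmult (ip st q (offd (xf j) (yf j)) (offd (xf i) (yf i)))
        (lmult (of_real C) (mmul (mdiag (inverse q ^ 4) (q ^ 4)) (madj st (offd (xf i) (yf i)))))))"
    unfolding scalar_curv_def line_elt_def ricci_def om C_def by (rule ip2_map)
  also have "\<dots> = (\<Sum>j\<leftarrow>[1,2,3]. \<Sum>i\<leftarrow>[1,2,3].
      (C * q * q ^ 4) *\<^sub>R (xf j * (q *\<^sub>R (st (yf j) * yf i) + inverse q *\<^sub>R (st (xf j) * xf i)) * st (xf i))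
    + (C * inverse q * inverse q ^ 4) *\<^sub>R (yf j * (q *\<^sub>R (st (yf j) * yf i) + inverse q *\<^sub>R (st (xf j) * xf i)) * st (yf i)))"
    by (simp only: term_eq[OF st] ip_offd[OF st])
  also have "\<dots> = (\<Sum>j\<in>set [1,2,3]. \<Sum>i\<in>set [1,2,3].
      (C * q * q ^ 4) *\<^sub>R (xf j * (q *\<^sub>R (st (yf j) * yf i) + inverse q *\<^sub>R (st (xf j) * xf i)) * st (xf i))
    + (C * inverse q * inverse q ^ 4) *\<^sub>R (yf j * (q *\<^sub>R (st (yf j) * yf i) + inverse q *\<^sub>R (st (xf j) * xf i)) * st (yf i)))"
    by (simp only: sum_list_distinct_conv_sum_set[OF d])
  also have "\<dots> = (C * q * q ^ 4) *\<^sub>R (q *\<^sub>R ((\<Sum>j\<in>set [1,2,3]. xf j * st (yf j)) * (\<Sum>i\<in>set [1,2,3]. yf i * st (xf i)))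
             + inverse q *\<^sub>R ((\<Sum>j\<in>set [1,2,3]. xf j * st (xf j)) * (\<Sum>i\<in>set [1,2,3]. xf i * st (xf i))))
   + (C * inverse q * inverse q ^ 4) *\<^sub>R (q *\<^sub>R ((\<Sum>j\<in>set [1,2,3]. yf j * st (yf j)) * (\<Sum>i\<in>set [1,2,3]. yf i * st (yf i)))
             + inverse q *\<^sub>R ((\<Sum>j\<in>set [1,2,3]. yf j * st (xf j)) * (\<Sum>i\<in>set [1,2,3]. xf i * st (yf i))))"
    by (rule G)
  also have "\<dots> = of_real (C * (inverse q ^ 6 + q ^ 6))"
  proof -
    have sq: "sqrt q * inverse (sqrt q) = 1" "inverse (sqrt q) * sqrt q = 1" using q by auto
    have sq2: "sqrt q * sqrt q = q" "inverse (sqrt q) * inverse (sqrt q) = inverse q" using q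
      by (auto simp flip: inverse_mult_distrib)
    have xy: "xf j * st (yf j) = st (A j) * B j" for j
      unfolding xf_def yf_def using st by (simp add: star_basic sgn_sq sq)
    have yx: "yf j * st (xf j) = st (B j) * A j" for j
      unfolding xf_def yf_def using st by (simp add: star_basic sgn_sq sq)
    have xx: "xf j * st (xf j) = q *\<^sub>R (st (A j) * A j)" for j
      unfolding xf_def using st q by (simp add: star_basic sgn_sq sq2)
    have yy: "yf j * st (yf j) = inverse q *\<^sub>R (st (B j) * B j)" for j
      unfolding yf_def using st q by (simp add: star_basic sgn_sq sq2)
    have S1: "(\<Sum>j\<in>set [1,2,3]. xf j * st (yf j)) = 0"
      using UAB[OF st R] by (simp only: xy A_def B_def) simp
    have S2: "(\<Sum>j\<in>set [1,2,3]. yf j * st (xf j)) = 0"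
      using UBA[OF st R] by (simp only: yx A_def B_def) simp
    have S3: "(\<Sum>j\<in>set [1,2,3]. xf j * st (xf j)) = q *\<^sub>R 1"
      using UA[OF st R] by (simp only: xx A_def B_def flip: scaleR_sum_right) simp
    have S4: "(\<Sum>j\<in>set [1,2,3]. yf j * st (yf j)) = inverse q *\<^sub>R 1"
      using UB[OF st R] by (simp only: yy A_def B_def flip: scaleR_sum_right) simp
    show ?thesis unfolding S1 S2 S3 S4 using q
      by (simp add: scaleR_conv_of_real field_simps flip: of_real_mult of_real_add)
         (simp add: eval_nat_numeral algebra_simps)
  qed
  finally show ?thesis unfolding C_def .
qed


theorem mainTheorem8:
  fixes q :: real and st :: "'a::real_algebra_1 \<Rightarrow> 'a" and a b :: 'a
  assumes "0 < q" and "q \<le> 1"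
    and "is_star st"
    and "suq2_rel st q a b"
  shows "scalar_curv st q a b
           = of_real (qnum 2 q / (q^2 + inverse q ^ 2) * (inverse q ^ 6 + q ^ 6))
       \<and> qnum 2 q / (q^2 + inverse q ^ 2) * (inverse q ^ 6 + q ^ 6)
           = qnum 2 q * (1 + (inverse q ^ 2 - q ^ 2)^2)
       \<and> ((\<lambda>p. qnum 2 p / (p^2 + inverse p ^ 2) * (inverse p ^ 6 + p ^ 6)) \<longlongrightarrow> 2) (at_left 1)"
  using main1[OF assms(1,3,4)] part2[OF assms(1)] part3 by blast

end
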